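(* The lattice $L=U+A_2+2E_8+A_1$ is achiral, i.e., for some cell $P$ of $\Lambda(L)$ there is an automorphism $g$ of $L$ with $g(P)=P$ which is $P$-reversing and $\mathbb{Z}/3$-direct.
   Context: $U$ has Gram matrix $\begin{pmatrix}0&1\\1&0\end{pmatrix}$; $A_1,A_2,E_8$ are positive definite root lattices; $+$ denotes orthogonal sum. For $L$: $V_k=\{v\in L:v^2=k,\ 2vw/v^2\in\mathbb{Z}\ \forall w\in L\}$ ($k=2,6$); $\Lambda(L)=\{x\in L\otimes\mathbb{R}:x^2<0\}/\mathbb{R}^*$; cells are closures of components of the complement of the hyperplanes $v^\perp$, $v\in V_2\cup V_6$. A cell $P$ lifts to two opposite pieces $\pm P^\sharp$ in $\{x^2<0\}/\mathbb{R}_{>0}$; $g$ with $g(P)=P$ is $P$-reversing if $g(P^\sharp)=-P^\sharp$. $g$ is $\mathbb{Z}/3$-direct if it acts trivially on the $3$-primary part ($\cong\mathbb{Z}/3$) of the discriminant group $L^*/L$. *)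

theory Defs
  imports "HOL-Analysis.Analysis" "HOL-Library.Numeral_Type"
begin

text \<open>The lattice L = U + A2 + 2 E8 + A1 (rank 21) is modelled as the integer points
  of real^21, with coordinates indexed 0..20 (via idx) in the basis
  U: 0,1;  A2: 2,3;  first E8: 4..11;  second E8: 12..19;  A1: 20.\<close>

definition idx :: "21 \<Rightarrow> nat" where
  "idx i = nat (Rep_bit1 i)"

text \<open>Cartan matrix (positive definite root lattice Gram matrix) given by the edge set of the
  Dynkin diagram.\<close>
definition cartan :: "(nat \<times> nat) set \<Rightarrow> nat \<Rightarrow> nat \<Rightarrow> int" where
  "cartan E i j = (if i = j then 2 else if (i, j) \<in> E \<or> (j, i) \<in> E then -1 else 0)"

text \<open>E8 Dynkin diagram, Bourbaki numbering 1..8 shifted to 0..7: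
  edges 1-3, 2-4, 3-4, 4-5, 5-6, 6-7, 7-8.\<close>
definition E8_edges :: "(nat \<times> nat) set" where
  "E8_edges = {(0,2), (1,3), (2,3), (3,4), (4,5), (5,6), (6,7)}"

definition A2_edges :: "(nat \<times> nat) set" where
  "A2_edges = {(0,1)}"

definition gramL :: "nat \<Rightarrow> nat \<Rightarrow> int" where
  "gramL i j =
    (if i < 2 \<and> j < 2 then (if i \<noteq> j then 1 else 0)
     else if 2 \<le> i \<and> i < 4 \<and> 2 \<le> j \<and> j < 4 then cartan A2_edges (i - 2) (j - 2)
     else if 4 \<le> i \<and> i < 12 \<and> 4 \<le> j \<and> j < 12 then cartan E8_edges (i - 4) (j - 4)
     else if 12 \<le> i \<and> i < 20 \<and> 12 \<le> j \<and> j < 20 then cartan E8_edges (i - 12) (j - 12)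
     else if i = 20 \<and> j = 20 then 2
     else 0)"

text \<open>The bilinear form on L \<otimes> R = real^21.\<close>
definition bil :: "real^21 \<Rightarrow> real^21 \<Rightarrow> real" where
  "bil x y = (\<Sum>i\<in>UNIV. \<Sum>j\<in>UNIV. x $ i * of_int (gramL (idx i) (idx j)) * y $ j)"

definition latL :: "(real^21) set" where
  "latL = {x. \<forall>i. x $ i \<in> \<int>}"

text \<open>V_k = {v in L : v^2 = k, 2 v.w / v^2 in Z for all w in L}.\<close>
definition Vk :: "real \<Rightarrow> (real^21) set" where
  "Vk k = {v \<in> latL. bil v v = k \<and> (\<forall>w\<in>latL. 2 * bil v w / bil v v \<in> \<int>)}"

text \<open>The negative cone {x^2 < 0}; Lambda(L) is its quotient by R^*.  We work on the cone:
  cells of Lambda(L) correspond to pairs \<open>\<pm>P#\<close> of lifted cells in the cone.\<close>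
definition negcone :: "(real^21) set" where
  "negcone = {x. bil x x < 0}"

definition walls :: "(real^21) set" where
  "walls = (\<Union>v \<in> Vk 2 \<union> Vk 6. {x. bil v x = 0})"

text \<open>A lifted cell P#: closure (within the cone) of a connected component of the complement
  of the walls.\<close>
definition lifted_cell :: "(real^21) set \<Rightarrow> bool" where
  "lifted_cell Q \<longleftrightarrow>
     (\<exists>x \<in> negcone - walls. Q = closure (connected_component_set (negcone - walls) x) \<inter> negcone)"

text \<open>Automorphisms of L, represented by their matrices acting on real^21.\<close>
definition autL :: "real^21^21 \<Rightarrow> bool" where
  "autL M \<longleftrightarrow> (\<lambda>x. M *v x) ` latL = latL \<and> (\<forall>x y. bil (M *v x) (M *v y) = bil x y)"

definition dualL :: "(real^21) set" where
  "dualL = {y. \<forall>w\<in>latL. bil y w \<in> \<int>}"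

text \<open>Representatives of the 3-primary part of L*/L.\<close>
definition dual3 :: "(real^21) set" where
  "dual3 = {y \<in> dualL. \<exists>k::nat. (3 ^ k) *\<^sub>R y \<in> latL}"

definition Z3_direct :: "real^21^21 \<Rightarrow> bool" where
  "Z3_direct M \<longleftrightarrow> (\<forall>y\<in>dual3. M *v y - y \<in> latL)"

end

theory Submission
  imports Defs
begin


section \<open>Indexing\<close>

lemma idx_lt: "idx i < 21"
proof -
  have "Rep_bit1 i \<in> {0..<1 + 2 * int CARD(10)}"
    by (rule Rep_bit1)
  then show ?thesis unfolding idx_def by (simp add: nat_less_iff)
qed

definition ix :: "nat \<Rightarrow> 21" where "ix k = Abs_bit1 (int k)"

lemma idx_ix: "k < 21 \<Longrightarrow> idx (ix k) = k"
  unfolding idx_def ix_def by (simp add: Abs_bit1_inverse)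

lemma ix_idx: "ix (idx i) = i"
proof -
  have "Rep_bit1 i \<in> {0..<1 + 2 * int CARD(10)}"
    by (rule Rep_bit1)
  then show ?thesis unfolding idx_def ix_def by (simp add: Rep_bit1_inverse)
qed

lemma idx_inj: "idx i = idx j \<longleftrightarrow> i = j"
  by (metis ix_idx)

lemma bij_ix: "bij_betw ix {..<21} UNIV"
  by (rule bij_betwI[where g=idx]) (auto simp: idx_ix ix_idx idx_lt)

lemma sum21: "(\<Sum>i\<in>UNIV. f i) = (\<Sum>k<21. f (ix k))"
  using sum.reindex_bij_betw[OF bij_ix, of f] by simp

section \<open>Integer matrices as lists\<close>

definition mat_of :: "int list list \<Rightarrow> real^21^21" where
  "mat_of A = (\<chi> i j. of_int (A ! idx i ! idx j))"
definition vec_of :: "int list \<Rightarrow> real^21" where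
  "vec_of v = (\<chi> i. of_int (v ! idx i))"

definition mmul :: "int list list \<Rightarrow> int list list \<Rightarrow> int list list" where
  "mmul A B = map (\<lambda>i. map (\<lambda>j. \<Sum>k\<leftarrow>[0..<21]. A!i!k * B!k!j) [0..<21]) [0..<21]"
definition mvl :: "int list list \<Rightarrow> int list \<Rightarrow> int list" where
  "mvl A v = map (\<lambda>i. \<Sum>k\<leftarrow>[0..<21]. A!i!k * v!k) [0..<21]"
definition dotl :: "int list \<Rightarrow> int list \<Rightarrow> int" where
  "dotl u v = (\<Sum>k\<leftarrow>[0..<21]. u!k * v!k)"
definition Il :: "int list list" where
  "Il = map (\<lambda>i. map (\<lambda>j. if i = j then 1 else 0) [0..<21]) [0..<21]"
definition mtrans :: "int list list \<Rightarrow> int list list" where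
  "mtrans A = map (\<lambda>i. map (\<lambda>j. A!j!i) [0..<21]) [0..<21]"
definition madd :: "int list list \<Rightarrow> int list list \<Rightarrow> int list list" where
  "madd A B = map (\<lambda>i. map (\<lambda>j. A!i!j + B!i!j) [0..<21]) [0..<21]"
definition msub :: "int list list \<Rightarrow> int list list \<Rightarrow> int list list" where
  "msub A B = map (\<lambda>i. map (\<lambda>j. A!i!j - B!i!j) [0..<21]) [0..<21]"
definition msc :: "int \<Rightarrow> int list list \<Rightarrow> int list list" where
  "msc c A = map (\<lambda>i. map (\<lambda>j. c * A!i!j) [0..<21]) [0..<21]"
definition Glist :: "int list list" where
  "Glist = map (\<lambda>i. map (\<lambda>j. gramL i j) [0..<21]) [0..<21]"

lemma mat_of_nth: "mat_of A $ i $ j = of_int (A ! idx i ! idx j)"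
  by (simp add: mat_of_def)

lemma vec_of_nth: "vec_of v $ i = of_int (v ! idx i)"
  by (simp add: vec_of_def)

lemma sum_list21: "(\<Sum>k\<leftarrow>[0..<21]. f k) = (\<Sum>k<21. f k)"
  by (simp add: sum_list_sum_nth atLeast0LessThan)

lemma mat_of_mmul: "mat_of A ** mat_of B = mat_of (mmul A B)"
  by (simp add: vec_eq_iff matrix_matrix_mult_def mat_of_nth mmul_def idx_lt sum21 idx_ix sum_list21)

lemma mat_of_mvl: "mat_of A *v vec_of v = vec_of (mvl A v)"
  by (simp add: vec_eq_iff matrix_vector_mult_def mat_of_nth vec_of_nth mvl_def idx_lt sum21 idx_ix sum_list21)

lemma vec_of_dot: "vec_of u \<bullet> vec_of v = of_int (dotl u v)"
  by (simp add: inner_vec_def vec_of_nth dotl_def sum21 idx_ix sum_list21)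

lemma mat_of_Il: "mat_of Il = mat 1"
  by (simp add: vec_eq_iff mat_of_nth Il_def idx_lt mat_def idx_inj)

lemma mat_of_mtrans: "mat_of (mtrans A) = transpose (mat_of A)"
  by (simp add: vec_eq_iff mat_of_nth mtrans_def idx_lt transpose_def)

lemma mat_of_madd: "mat_of (madd A B) = mat_of A + mat_of B"
  by (simp add: vec_eq_iff mat_of_nth madd_def idx_lt)

lemma mat_of_msub: "mat_of (msub A B) = mat_of A - mat_of B"
  by (simp add: vec_eq_iff mat_of_nth msub_def idx_lt)

lemma mat_of_msc: "mat_of (msc c A) *v x = of_int c *\<^sub>R (mat_of A *v x)"
  by (simp add: vec_eq_iff mat_of_nth msc_def idx_lt matrix_vector_mult_def sum_distrib_left mult.assoc)

definition Gm :: "real^21^21" where "Gm = mat_of Glist"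

lemma bil_eq: "bil x y = x \<bullet> (Gm *v y)"
  by (simp add: bil_def Gm_def inner_vec_def matrix_vector_mult_def mat_of_nth Glist_def idx_lt
      sum_distrib_left mult.assoc)



definition Ml :: "int list list" where "Ml = [[-13, 12, -12, 12, 0, 0, 0, 0, 0, -3, 0, 0, 3, 0, 0, 0, 0, 0, -6, 0, 0], [12, -13, 12, -12, 0, 0, 0, 0, 0, 3, 0, 0, -3, 0, 0, 0, 0, 0, 6, 0, 0], [4, -4, 3, -4, 0, 0, 0, 0, 0, 1, 0, 0, -1, 0, 0, 0, 0, 0, 2, 0, 0], [-4, 4, -4, 3, 0, 0, 0, 0, 0, -1, 0, 0, 1, 0, 0, 0, 0, 0, -2, 0, 0], [18, -18, 18, -18, 0, 0, 0, 0, 0, 4, 0, 0, -4, 0, 0, 0, 0, -1, 10, 0, 0], [27, -27, 27, -27, 0, 0, 0, 0, 0, 6, 0, 0, -6, -1, 0, 0, 0, 0, 14, 0, 0], [36, -36, 36, -36, 0, 0, 0, 0, 0, 8, 0, 0, -8, 0, 0, 0, -1, 0, 19, 0, 0], [54, -54, 54, -54, 0, 0, 0, 0, 0, 12, 0, 0, -12, 0, 0, -1, 0, 0, 28, 0, 0], [45, -45, 45, -45, 0, 0, 0, 0, 0, 10, 0, 0, -10, 0, -1, 0, 0, 0, 23, 0, 0], [36, -36, 36, -36, 0, 0, 0, 0, 0, 8, 0, 0, -9, 0, 0, 0, 0, 0, 18, 0, 0], [24, -24, 24, -24, 0, 0, 0, 0, 0, 6, -1, 0, -6, 0, 0, 0,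 0, 0, 12, 0, 0], [12, -12, 12, -12, 0, 0, 0, 0, 0, 3, 0, -1, -3, 0, 0, 0, 0, 0, 6, 0, 0], [12, -12, 12, -12, 0, 0, 0, 0, 0, 3, 0, 0, -4, 0, 0, 0, 0, 0, 6, 0, 0], [21, -21, 21, -21, 0, -1, 0, 0, 0, 6, 0, 0, -6, 0, 0, 0, 0, 0, 10, 0, 0], [27, -27, 27, -27, 0, 0, 0, 0, -1, 8, 0, 0, -8, 0, 0, 0, 0, 0, 13, 0, 0], [42, -42, 42, -42, 0, 0, 0, -1, 0, 12, 0, 0, -12, 0, 0, 0, 0, 0, 20, 0, 0], [36, -36, 36, -36, 0, 0, -1, 0, 0, 10, 0, 0, -10, 0, 0, 0, 0, 0, 17, 0, 0], [30, -30, 30, -30, -1, 0, 0, 0, 0, 8, 0, 0, -8, 0, 0, 0, 0, 0, 14, 0, 0], [24, -24, 24, -24, 0, 0, 0, 0, 0, 6, 0, 0, -6, 0, 0, 0, 0, 0, 11, 0, 0], [12, -12, 12, -12, 0, 0, 0, 0, 0, 3, 0, 0, -3, 0, 0, 0, 0, 0, 6, -1, 0], [0, 0, 0, 0, 0, 0, 0, 0, 0, 0, 0, 0, 0, 0, 0, 0, 0, 0, 0, 0, -1]]"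

definition Ql :: "int list list" where "Ql = [[0, 0, -3, 0, 0, 0, 0, 0, 0, 0, 0, 0, 0, 0, 0, 0, 0, 0, 0, 0, 0], [0, 0, 3, 0, 0, 0, 0, 0, 0, 0, 0, 0, 0, 0, 0, 0, 0, 0, 0, 0, 0], [0, 0, 1, 0, 0, 0, 0, 0, 0, 0, 0, 0, 0, 0, 0, 0, 0, 0, 0, 0, 0], [0, 0, -1, 0, 0, 0, 0, 0, 0, 0, 0, 0, 0, 0, 0, 0, 0, 0, 0, 0, 0], [0, 0, 0, 0, 1, 0, 0, 0, 0, 0, 0, 0, 0, 0, 0, 0, 0, 0, 0, 0, 0], [0, 0, 0, 0, 0, 1, 0, 0, 0, 0, 0, 0, 0, 0, 0, 0, 0, 0, 0, 0, 0], [0, 0, 0, 0, 0, 0, 1, 0, 0, 0, 0, 0, 0, 0, 0, 0, 0, 0, 0, 0, 0], [0, 0, 0, 0, 0, 0, 0, 1, 0, 0, 0, 0, 0, 0, 0, 0, 0, 0, 0, 0, 0], [0, 0, 0, 0, 0, 0, 0, 0, 1, 0, 0, 0, 0, 0, 0, 0, 0, 0, 0, 0, 0], [0, 0, 9, 0, 0, 0, 0, 0, 0, 0, 0, 0, 0, 0, 0, 0, 0, 0, 0, 0, 0], [0, 0, 6, 0, 0, 0, 0, 0, 0, 0, 0, 0, 0, 0, 0, 0, 0, 0, 0, 0, 0], [0, 0, 3, 0, 0, 0, 0, 0, 0, 0, 0, 0, 0, 0, 0, 0, 0, 0, 0, 0, 0], [0, 0, 3, 0, 0, 0, 0, 0,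 0, 0, 0, 0, 0, 0, 0, 0, 0, 0, 0, 0, 0], [0, 0, 12, 0, 0, -1, 0, 0, 0, 0, 0, 0, 0, 0, 0, 0, 0, 0, 0, 0, 0], [0, 0, 18, 0, 0, 0, 0, 0, -1, 0, 0, 0, 0, 0, 0, 0, 0, 0, 0, 0, 0], [0, 0, 24, 0, 0, 0, 0, -1, 0, 0, 0, 0, 0, 0, 0, 0, 0, 0, 0, 0, 0], [0, 0, 18, 0, 0, 0, -1, 0, 0, 0, 0, 0, 0, 0, 0, 0, 0, 0, 0, 0, 0], [0, 0, 12, 0, -1, 0, 0, 0, 0, 0, 0, 0, 0, 0, 0, 0, 0, 0, 0, 0, 0], [0, 0, 6, 0, 0, 0, 0, 0, 0, 0, 0, 0, 0, 0, 0, 0, 0, 0, 0, 0, 0], [0, 0, 3, 0, 0, 0, 0, 0, 0, 0, 0, 0, 0, 0, 0, 0, 0, 0, 0, 0, 0], [0, 0, 0, 0, 0, 0, 0, 0, 0, 0, 0, 0, 0, 0, 0, 0, 0, 0, 0, 0, 0]]"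

definition Gi6l :: "int list list" where "Gi6l = [[0, 6, 0, 0, 0, 0, 0, 0, 0, 0, 0, 0, 0, 0, 0, 0, 0, 0, 0, 0, 0], [6, 0, 0, 0, 0, 0, 0, 0, 0, 0, 0, 0, 0, 0, 0, 0, 0, 0, 0, 0, 0], [0, 0, 4, 2, 0, 0, 0, 0, 0, 0, 0, 0, 0, 0, 0, 0, 0, 0, 0, 0, 0], [0, 0, 2, 4, 0, 0, 0, 0, 0, 0, 0, 0, 0, 0, 0, 0, 0, 0, 0, 0, 0], [0, 0, 0, 0, 24, 30, 42, 60, 48, 36, 24, 12, 0, 0, 0, 0, 0, 0, 0, 0, 0], [0, 0, 0, 0, 30, 48, 60, 90, 72, 54, 36, 18, 0, 0, 0, 0, 0, 0, 0, 0, 0], [0, 0, 0, 0, 42, 60, 84, 120, 96, 72, 48, 24, 0, 0, 0, 0, 0, 0, 0, 0, 0], [0, 0, 0, 0, 60, 90, 120, 180, 144, 108, 72, 36, 0, 0, 0, 0, 0, 0, 0, 0, 0], [0, 0, 0, 0, 48, 72, 96, 144, 120, 90, 60, 30, 0, 0, 0, 0, 0, 0, 0, 0, 0], [0, 0, 0, 0, 36, 54, 72, 108, 90, 72, 48, 24, 0, 0, 0, 0, 0, 0, 0, 0, 0], [0, 0, 0, 0, 24, 36, 48, 72, 60, 48, 36, 18, 0, 0, 0, 0, 0, 0, 0, 0, 0], [0, 0, 0, 0, 12, 18, 24, 36, 30, 24, 18, 12, 0, 0, 0, 0, 0, 0, 0, 0, 0], [0, 0, 0, 0, 0, 0, 0,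 0, 0, 0, 0, 0, 24, 30, 42, 60, 48, 36, 24, 12, 0], [0, 0, 0, 0, 0, 0, 0, 0, 0, 0, 0, 0, 30, 48, 60, 90, 72, 54, 36, 18, 0], [0, 0, 0, 0, 0, 0, 0, 0, 0, 0, 0, 0, 42, 60, 84, 120, 96, 72, 48, 24, 0], [0, 0, 0, 0, 0, 0, 0, 0, 0, 0, 0, 0, 60, 90, 120, 180, 144, 108, 72, 36, 0], [0, 0, 0, 0, 0, 0, 0, 0, 0, 0, 0, 0, 48, 72, 96, 144, 120, 90, 60, 30, 0], [0, 0, 0, 0, 0, 0, 0, 0, 0, 0, 0, 0, 36, 54, 72, 108, 90, 72, 48, 24, 0], [0, 0, 0, 0, 0, 0, 0, 0, 0, 0, 0, 0, 24, 36, 48, 72, 60, 48, 36, 18, 0], [0, 0, 0, 0, 0, 0, 0, 0, 0, 0, 0, 0, 12, 18, 24, 36, 30, 24, 18, 12, 0], [0, 0, 0, 0, 0, 0, 0, 0, 0, 0, 0, 0, 0, 0, 0, 0, 0, 0, 0, 0, 3]]"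

definition Cl :: "int list list" where "Cl = [[24, -28, -8, 8, -36, -54, -72, -108, -90, -72, -48, -24, -24, -42, -54, -84, -72, -60, -48, -24, 0], [-28, 24, 8, -8, 36, 54, 72, 108, 90, 72, 48, 24, 24, 42, 54, 84, 72, 60, 48, 24, 0], [-8, 8, 0, -4, 12, 18, 24, 36, 30, 24, 16, 8, 8, 14, 18, 28, 24, 20, 16, 8, 0], [8, -8, -4, 0, -12, -18, -24, -36, -30, -24, -16, -8, -8, -14, -18, -28, -24, -20, -16, -8, 0], [-36, 36, 12, -12, 40, 62, 82, 124, 104, 84, 56, 28, 36, 62, 80, 124, 106, 88, 72, 36, 0], [-54, 54, 18, -18, 62, 92, 124, 186, 156, 126, 84, 42, 54, 92, 120, 186, 160, 134, 108, 54, 0], [-72, 72, 24, -24, 82, 124, 164, 248, 208, 168, 112, 56, 72, 124, 160, 248, 212, 178, 144, 72, 0], [-108, 108, 36, -36, 124, 186, 248, 372, 312, 252, 168, 84, 108, 186, 240, 372, 320, 268, 216, 108, 0], [-90, 90, 30, -30, 104, 156, 208, 312, 260, 210, 140, 70, 90, 156, 200, 312, 268, 224, 180, 90, 0], [-72, 72, 24, -24, 84, 126, 168, 252, 210, 168, 112, 56, 72, 126, 162, 252, 216, 180, 144, 72, 0], [-48, 48, 16, -16, 56, 84, 112, 168, 140, 112, 72, 36, 48, 84, 108, 168, 144, 120, 96, 48, 0], [-24, 24, 8, -8, 28, 42, 56, 84, 70, 56, 36, 16, 24, 42, 54, 84, 72, 60, 48, 24, 0], [-24, 24, 8, -8, 36,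 54, 72, 108, 90, 72, 48, 24, 8, 22, 26, 44, 40, 36, 32, 16, 0], [-42, 42, 14, -14, 62, 92, 124, 186, 156, 126, 84, 42, 22, 44, 56, 90, 80, 70, 60, 30, 0], [-54, 54, 18, -18, 80, 120, 160, 240, 200, 162, 108, 54, 26, 56, 68, 112, 100, 88, 76, 38, 0], [-84, 84, 28, -28, 124, 186, 248, 372, 312, 252, 168, 84, 44, 90, 112, 180, 160, 140, 120, 60, 0], [-72, 72, 24, -24, 106, 160, 212, 320, 268, 216, 144, 72, 40, 80, 100, 160, 140, 122, 104, 52, 0], [-60, 60, 20, -20, 88, 134, 178, 268, 224, 180, 120, 60, 36, 70, 88, 140, 122, 104, 88, 44, 0], [-48, 48, 16, -16, 72, 108, 144, 216, 180, 144, 96, 48, 32, 60, 76, 120, 104, 88, 72, 36, 0], [-24, 24, 8, -8, 36, 54, 72, 108, 90, 72, 48, 24, 16, 30, 38, 60, 52, 44, 36, 16, 0], [0, 0, 0, 0, 0, 0, 0, 0, 0, 0, 0, 0, 0, 0, 0, 0, 0, 0, 0, 0, -2]]"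

definition Dl :: "int list list" where "Dl = [[0, 0, 0, 0, 0, 0, 0, 0, 0, 0, 0, 0, 0, 0, 0, 0, 0, 0, 0, 0, 0], [0, 0, 0, 0, 0, 0, 0, 0, 0, 0, 0, 0, 0, 0, 0, 0, 0, 0, 0, 0, 0], [0, 0, 51, 0, 0, 0, 0, 0, -9, 0, 0, 0, 0, 0, 0, 0, 0, 0, 0, 0, 0], [0, 0, 0, 0, 0, 0, 0, 0, 0, 0, 0, 0, 0, 0, 0, 0, 0, 0, 0, 0, 0], [0, 0, 0, 0, 1, 0, -1, 0, 0, 0, 0, 0, 0, 0, 0, 0, 0, 0, 0, 0, 0], [0, 0, 0, 0, 0, 1, 0, -1, 0, 0, 0, 0, 0, 0, 0, 0, 0, 0, 0, 0, 0], [0, 0, 0, 0, 0, 0, 1, -1, 0, 0, 0, 0, 0, 0, 0, 0, 0, 0, 0, 0, 0], [0, 0, 0, 0, 0, 0, 0, 1, -1, 0, 0, 0, 0, 0, 0, 0, 0, 0, 0, 0, 0], [0, 0, 0, 0, 0, 0, 0, 0, 1, 0, 0, 0, 0, 0, 0, 0, 0, 0, 0, 0, 0], [0, 0, 0, 0, 0, 0, 0, 0, 0, 0, 0, 0, 0, 0, 0, 0, 0, 0, 0, 0, 0], [0, 0, 0, 0, 0, 0, 0, 0, 0, 0, 0, 0, 0, 0, 0, 0, 0, 0, 0, 0, 0], [0, 0, 0, 0, 0, 0, 0, 0, 0, 0, 0, 0, 0, 0, 0, 0, 0, 0, 0, 0, 0], [0, 0, 0, 0, 0, 0, 0, 0,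 0, 0, 0, 0, 0, 0, 0, 0, 0, 0, 0, 0, 0], [0, 0, 0, 0, 0, 0, 0, 0, 0, 0, 0, 0, 0, 0, 0, 0, 0, 0, 0, 0, 0], [0, 0, 0, 0, 0, 0, 0, 0, 0, 0, 0, 0, 0, 0, 0, 0, 0, 0, 0, 0, 0], [0, 0, 0, 0, 0, 0, 0, 0, 0, 0, 0, 0, 0, 0, 0, 0, 0, 0, 0, 0, 0], [0, 0, 0, 0, 0, 0, 0, 0, 0, 0, 0, 0, 0, 0, 0, 0, 0, 0, 0, 0, 0], [0, 0, 0, 0, 0, 0, 0, 0, 0, 0, 0, 0, 0, 0, 0, 0, 0, 0, 0, 0, 0], [0, 0, 0, 0, 0, 0, 0, 0, 0, 0, 0, 0, 0, 0, 0, 0, 0, 0, 0, 0, 0], [0, 0, 0, 0, 0, 0, 0, 0, 0, 0, 0, 0, 0, 0, 0, 0, 0, 0, 0, 0, 0], [0, 0, 0, 0, 0, 0, 0, 0, 0, 0, 0, 0, 0, 0, 0, 0, 0, 0, 0, 0, 0]]"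

definition x0l :: "int list" where "x0l = [-6, 6, 2, -2, 8, 12, 16, 24, 20, 16, 11, 6, 8, 12, 16, 24, 20, 16, 12, 6, 0]"

lemma N1: "mmul Ml Ml = Il" by code_simp
lemma N2: "mmul (mtrans Ml) (mmul Glist Ml) = Glist" by code_simp
lemma N3: "mtrans Glist = Glist" by code_simp
lemma N4: "mmul Gi6l Glist = msc 6 Il" by code_simp
lemma N5: "mmul (msub Ml Il) Gi6l = msc 3 Cl" by code_simp
lemma N6: "mmul (mtrans Ql) (mmul Glist Ql) = msc 2 (madd Dl (mtrans Dl))" by code_simp
lemma N7: "mmul (msub Il Ql) (msub Ml Il) = msc (-2) (msub Il Ql)" by code_simp
lemma N8: "mvl Ml x0l = map uminus x0l" by code_simp
lemma N9: "dotl x0l (mvl Glist x0l) = -2" by code_simp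



definition MM :: "real^21^21" where "MM = mat_of Ml"

lemma MM_inv: "MM *v (MM *v x) = x"
  by (simp add: MM_def matrix_vector_mul_assoc mat_of_mmul N1 mat_of_Il)

lemma Gm_sym: "transpose Gm = Gm"
  by (metis Gm_def N3 mat_of_mtrans)

lemma dot_mv: "(A *v x) \<bullet> y = x \<bullet> (transpose A *v y)" for A :: "real^21^21"
  by (metis dot_lmul_matrix transpose_matrix_vector transpose_transpose)

lemma bil_sym: "bil x y = bil y x"
  unfolding bil_eq by (metis dot_mv Gm_sym inner_commute)

lemma bil_MM: "bil (MM *v x) (MM *v y) = bil x y"
proof -
  have "bil (MM *v x) (MM *v y) = x \<bullet> ((transpose MM ** Gm ** MM) *v y)"
    unfolding bil_eq dot_mv by (simp add: matrix_vector_mul_assoc matrix_mul_assoc)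
  also have "transpose MM ** Gm ** MM = mat_of (mtrans Ml) ** (mat_of Glist ** mat_of Ml)"
    by (simp add: MM_def Gm_def mat_of_mtrans matrix_mul_assoc)
  also have "\<dots> = Gm"
    by (simp only: mat_of_mmul N2 Gm_def)
  finally show ?thesis by (simp add: bil_eq)
qed

lemma bil_MM_adj: "bil (MM *v x) y = bil x (MM *v y)"
  by (metis MM_inv bil_MM)

lemma mat_of_int: "x \<in> latL \<Longrightarrow> mat_of A *v x \<in> latL"
  by (auto simp: latL_def matrix_vector_mult_def mat_of_nth intro!: Ints_sum Ints_mult)

lemma latL_MM: "(\<lambda>x. MM *v x) ` latL = latL"
proof
  show "(\<lambda>x. MM *v x) ` latL \<subseteq> latL" using mat_of_int by (auto simp: MM_def)
  show "latL \<subseteq> (\<lambda>x. MM *v x) ` latL"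
  proof
    fix x assume "x \<in> latL"
    then have "MM *v x \<in> latL" using mat_of_int by (auto simp: MM_def)
    then show "x \<in> (\<lambda>x. MM *v x) ` latL" by (metis MM_inv imageI)
  qed
qed

lemma autL_MM: "autL MM"
  unfolding autL_def using latL_MM bil_MM by auto




lemma axis_latL: "axis i 1 \<in> latL"
  by (auto simp: latL_def axis_def)

lemma latL_diff: "x \<in> latL \<Longrightarrow> y \<in> latL \<Longrightarrow> x - y \<in> latL"
  by (auto simp: latL_def)

lemma dual_int: "y \<in> dualL \<Longrightarrow> Gm *v y \<in> latL"
proof -
  assume y: "y \<in> dualL"
  have "(Gm *v y) $ i \<in> \<int>" for i
  proof -
    have "bil y (axis i 1) \<in> \<int>" using y axis_latL by (auto simp: dualL_def)
    moreover have "bil y (axis i 1) = bil (axis i 1) y" by (rule bil_sym)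
    moreover have "bil (axis i 1) y = (Gm *v y) $ i"
      by (simp add: bil_eq inner_axis')
    ultimately show ?thesis by simp
  qed
  then show ?thesis by (simp add: latL_def)
qed

lemma six_y: "6 *\<^sub>R y = mat_of Gi6l *v (Gm *v y)"
proof -
  have "mat_of Gi6l *v (Gm *v y) = mat_of (msc 6 Il) *v y"
    by (simp add: Gm_def matrix_vector_mul_assoc mat_of_mmul N4)
  also have "\<dots> = 6 *\<^sub>R y" by (simp add: mat_of_msc mat_of_Il)
  finally show ?thesis by simp
qed

lemma int_arith3:
  fixes t :: real
  assumes a: "6 * t \<in> \<int>" and b: "3 ^ k * t \<in> \<int>"
  shows "3 * t \<in> \<int>"
proof (cases k)
  case 0
  then show ?thesis using b by simp
next
  case (Suc k')
  from a obtain a' where a': "6 * t = of_int a'" by (metis Ints_cases)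
  from b obtain b' where b': "3 ^ k * t = of_int b'" by (metis Ints_cases)
  have "(of_int (3 ^ k * a') :: real) = 3 ^ k * (6 * t)" using a' by simp
  also have "\<dots> = 6 * (3 ^ k * t)" by (simp only: mult.left_commute)
  also have "\<dots> = of_int (6 * b')" using b' by simp
  finally have eq: "3 ^ k * a' = 2 * (3 * b')" by (simp only: of_int_eq_iff)
  have "(2::int) dvd 3 ^ k * a'" unfolding eq by (rule dvd_triv_left)
  moreover have "coprime (2::int) (3 ^ k)" by simp
  ultimately have "2 dvd a'" using coprime_dvd_mult_right_iff by blast
  then obtain c where "a' = 2 * c" by blast
  then have "3 * t = of_int c" using a' by simp
  then show ?thesis by simp
qed

lemma three_y: "y \<in> dual3 \<Longrightarrow> 3 *\<^sub>R y \<in> latL"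
proof -
  assume y: "y \<in> dual3"
  then obtain k :: nat where k: "3 ^ k *\<^sub>R y \<in> latL" and yd: "y \<in> dualL" by (auto simp: dual3_def)
  have "6 *\<^sub>R y \<in> latL" unfolding six_y using mat_of_int dual_int[OF yd] by blast
  then show ?thesis using k int_arith3 by (auto simp: latL_def)
qed

lemma Z3_MM: "Z3_direct MM"
  unfolding Z3_direct_def
proof
  fix y assume y: "y \<in> dual3"
  then have yd: "y \<in> dualL" by (simp add: dual3_def)
  define u where "u = Gm *v y"
  define d where "d = MM *v y - y"
  have dm: "d = mat_of (msub Ml Il) *v y"
    by (simp add: d_def mat_of_msub mat_of_Il MM_def matrix_vector_mult_diff_rdistrib)
  have "6 *\<^sub>R d = mat_of (msub Ml Il) *v (6 *\<^sub>R y)"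
    by (simp add: dm matrix_vector_mult_scaleR)
  also have "\<dots> = mat_of (msc 3 Cl) *v u"
    by (simp only: six_y u_def[symmetric] matrix_vector_mul_assoc mat_of_mmul N5)
  also have "\<dots> = 3 *\<^sub>R (mat_of Cl *v u)" by (simp add: mat_of_msc)
  finally have eq6: "6 *\<^sub>R d = 3 *\<^sub>R (mat_of Cl *v u)" .
  have "2 *\<^sub>R d = (1/3) *\<^sub>R (6 *\<^sub>R d)" by simp
  also have "\<dots> = mat_of Cl *v u" using eq6 by simp
  finally have "2 *\<^sub>R d = mat_of Cl *v u" .
  then have d2: "2 *\<^sub>R d \<in> latL" using mat_of_int dual_int[OF yd] u_def by simp
  have e3: "3 *\<^sub>R d = MM *v (3 *\<^sub>R y) - 3 *\<^sub>R y"
    by (simp add: d_def matrix_vector_mult_scaleR algebra_simps)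
  have m3: "MM *v (3 *\<^sub>R y) \<in> latL" unfolding MM_def by (rule mat_of_int[OF three_y[OF y]])
  have d3: "3 *\<^sub>R d \<in> latL" unfolding e3 by (rule latL_diff[OF m3 three_y[OF y]])
  have "d $ i \<in> \<int>" for i
  proof -
    have a: "3 * d $ i \<in> \<int>" "2 * d $ i \<in> \<int>" using d2 d3 by (auto simp: latL_def)
    have "3 * d $ i - 2 * d $ i \<in> \<int>" using a by (rule Ints_diff)
    then show ?thesis by simp
  qed
  then have "d \<in> latL" by (simp add: latL_def)
  then show "MM *v y - y \<in> latL" by (simp add: d_def)
qed




lemma bil_scaleR_right: "bil x (c *\<^sub>R y) = c * bil x y"
  by (simp add: bil_eq matrix_vector_mult_scaleR)
lemma bil_diff_right: "bil x (y - z) = bil x y - bil x z"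
  by (simp add: bil_eq matrix_vector_mult_diff_distrib inner_diff_right)
lemma bil_minus_right: "bil x (- y) = - bil x y"
  using bil_diff_right[of x 0 y] by (simp add: bil_eq)

section \<open>Fixed vectors of MM have norm divisible by 4\<close>

lemma fixed_norm4:
  assumes v: "v \<in> latL" and fx: "MM *v v = v"
  shows "\<exists>n::int. bil v v = 4 * of_int n"
proof -
  define Qm where "Qm = mat_of Ql"
  define Dm where "Dm = mat_of Dl"
  have "mat_of (msub Ml Il) *v v = 0"
    using fx by (simp add: mat_of_msub mat_of_Il MM_def matrix_vector_mult_diff_rdistrib)
  then have "0 = mat_of (msub Il Ql) *v (mat_of (msub Ml Il) *v v)" by simp
  also have "\<dots> = mat_of (msc (-2) (msub Il Ql)) *v v"
    by (simp only: matrix_vector_mul_assoc mat_of_mmul N7)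
  also have "\<dots> = (-2) *\<^sub>R (v - Qm *v v)"
    by (simp add: mat_of_msc mat_of_msub mat_of_Il Qm_def matrix_vector_mult_diff_rdistrib)
  finally have vQ: "Qm *v v = v" by simp
  have "bil v v = (Qm *v v) \<bullet> (Gm *v (Qm *v v))" by (simp add: bil_eq vQ)
  also have "\<dots> = v \<bullet> ((mat_of (mtrans Ql) ** (mat_of Glist ** mat_of Ql)) *v v)"
    by (simp add: dot_mv Qm_def Gm_def mat_of_mtrans matrix_vector_mul_assoc)
  also have "\<dots> = v \<bullet> (mat_of (msc 2 (madd Dl (mtrans Dl))) *v v)"
    by (simp only: mat_of_mmul N6)
  also have "\<dots> = 2 * (v \<bullet> (Dm *v v) + v \<bullet> (transpose Dm *v v))"
    by (simp add: mat_of_msc mat_of_madd mat_of_mtrans Dm_def matrix_vector_mult_add_rdistrib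
        inner_add_right)
  also have "v \<bullet> (transpose Dm *v v) = v \<bullet> (Dm *v v)"
    by (metis dot_mv transpose_transpose inner_commute)
  finally have eq: "bil v v = 4 * (v \<bullet> (Dm *v v))" by simp
  have "v \<bullet> (Dm *v v) \<in> \<int>"
    using mat_of_int[OF v, of Dl] v unfolding Dm_def
    by (auto simp: inner_vec_def latL_def intro!: Ints_sum Ints_mult)
  then obtain n where "v \<bullet> (Dm *v v) = of_int n" by (metis Ints_cases)
  with eq show ?thesis by auto
qed

lemma V_not_fixed:
  assumes "v \<in> Vk 2 \<union> Vk 6" shows "MM *v v \<noteq> v"
proof
  assume f: "MM *v v = v"
  from assms have v: "v \<in> latL" and nv: "bil v v = 2 \<or> bil v v = 6" by (auto simp: Vk_def)
  from fixed_norm4[OF v f] obtain n :: int where n: "bil v v = 4 * of_int n" by blast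
  from nv n have "4 * n = 2 \<or> 4 * n = 6"
    by (metis (mono_tags, opaque_lifting) of_int_eq_iff of_int_mult of_int_numeral)
  then show False by presburger
qed




lemma cont_mv [continuous_intros]:
  fixes A :: "real^21^21"
  shows "continuous_on S f \<Longrightarrow> continuous_on S (\<lambda>x. A *v f x)"
  by (rule continuous_on_compose2[of UNIV "(*v) A" S f]) (auto intro: matrix_vector_mult_linear_continuous_on)


definition PP :: "real^21 \<Rightarrow> real^21" where "PP z = (1/2) *\<^sub>R (z - MM *v z)"

lemma MM_PP: "MM *v PP z = - PP z"
  by (simp add: PP_def matrix_vector_mult_scaleR matrix_vector_mult_diff_distrib MM_inv algebra_simps)

lemma bil_PP: "bil v (PP z) = bil (PP v) z"
proof -
  have "bil v (PP z) = (1/2) * (bil v z - bil v (MM *v z))"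
    by (simp add: PP_def bil_scaleR_right bil_diff_right)
  also have "bil v (MM *v z) = bil (MM *v v) z" by (simp add: bil_MM_adj)
  also have "(1/2) * (bil v z - bil (MM *v v) z) = bil z (PP v)"
    by (simp add: PP_def bil_scaleR_right bil_diff_right bil_sym[of z])
  finally show ?thesis by (simp add: bil_sym)
qed

lemma bil_normal: "bil w z = (Gm *v w) \<bullet> z"
proof -
  have "bil w z = bil z w" by (rule bil_sym)
  then show ?thesis by (simp add: bil_eq inner_commute)
qed

lemma Gm_inj: "Gm *v w = 0 \<Longrightarrow> w = 0"
proof -
  assume "Gm *v w = 0"
  then have "6 *\<^sub>R w = 0" by (simp add: six_y)
  then show "w = 0" by simp
qed

lemma countable_latL: "countable latL"
proof -
  have "latL \<subseteq> (\<lambda>f::21 \<Rightarrow> int. \<chi> i. of_int (f i)) ` UNIV"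
  proof
    fix x assume x: "x \<in> latL"
    show "x \<in> range (\<lambda>f::21 \<Rightarrow> int. \<chi> i. of_int (f i))"
    proof (rule image_eqI[where x="\<lambda>i. \<lfloor>x $ i\<rfloor>"])
      show "x = (\<chi> i. of_int ((\<lambda>i. \<lfloor>x $ i\<rfloor>) i))"
        using x by (simp add: vec_eq_iff latL_def)
    qed simp
  qed
  moreover have "countable ((\<lambda>f::21 \<Rightarrow> int. \<chi> i. of_int (f i)) ` UNIV)"
    by (rule countable_image) (rule countableI_type)
  ultimately show ?thesis by (rule countable_subset)
qed

lemma x0_props: "MM *v vec_of x0l = - vec_of x0l" "bil (vec_of x0l) (vec_of x0l) = -2"
proof -
  have "MM *v vec_of x0l = vec_of (map uminus x0l)" by (simp add: MM_def mat_of_mvl N8)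
  also have "\<dots> = - vec_of x0l"
  proof -
    have "length x0l = 21" by (simp add: x0l_def)
    then show ?thesis by (simp add: vec_eq_iff vec_of_nth idx_lt)
  qed
  finally show "MM *v vec_of x0l = - vec_of x0l" .
  show "bil (vec_of x0l) (vec_of x0l) = -2"
    by (simp add: bil_eq Gm_def mat_of_mvl vec_of_dot N9)
qed

definition Vset where "Vset = Vk 2 \<union> Vk 6"

lemma exists_point: "\<exists>x. x \<in> negcone - walls \<and> MM *v x = - x"
proof -
  define S where "S = {z. bil (PP z) (PP z) < 0}"
  define Bad where "Bad = \<Union>((\<lambda>v. {z. (Gm *v PP v) \<bullet> z = 0}) ` Vset)"
  have "countable Vset"
    using countable_latL by (rule countable_subset[rotated]) (auto simp: Vset_def Vk_def)
  then have cB: "countable ((\<lambda>v. {z. (Gm *v PP v) \<bullet> z = 0}) ` Vset)" by simp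
  have nB: "negligible Bad"
    unfolding Bad_def
  proof (rule negligible_countable_Union[OF cB])
    fix T assume "T \<in> (\<lambda>v. {z. (Gm *v PP v) \<bullet> z = 0}) ` Vset"
    then obtain v where v: "v \<in> Vset" and T: "T = {z. (Gm *v PP v) \<bullet> z = 0}" by blast
    have "MM *v v \<noteq> v" using V_not_fixed v by (simp add: Vset_def)
    then have "PP v \<noteq> 0" by (auto simp: PP_def)
    then have "Gm *v PP v \<noteq> 0" using Gm_inj by blast
    then show "negligible T" unfolding T by (intro negligible_hyperplane) simp
  qed
  have oS: "open S" unfolding S_def
    by (rule open_Collect_less) (auto simp: bil_eq PP_def intro!: continuous_intros)
  have "PP (vec_of x0l) = vec_of x0l" by (simp add: PP_def x0_props)
  then have "vec_of x0l \<in> S" by (simp add: S_def x0_props)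
  then have "\<not> negligible S" using oS open_not_negligible by blast
  then have "\<not> S \<subseteq> Bad" using nB negligible_subset by blast
  then obtain z where zS: "z \<in> S" and zB: "z \<notin> Bad" by blast
  define x where "x = PP z"
  have "x \<in> negcone" using zS by (simp add: S_def negcone_def x_def)
  moreover have "x \<notin> walls"
  proof
    assume "x \<in> walls"
    then obtain v where v: "v \<in> Vset" and b0: "bil v x = 0" by (auto simp: walls_def Vset_def)
    have "(Gm *v PP v) \<bullet> z = bil (PP v) z" by (simp only: bil_normal)
    also have "\<dots> = bil v x" by (simp only: x_def bil_PP)
    finally have "(Gm *v PP v) \<bullet> z = 0" using b0 by simp
    then have "z \<in> Bad" using v by (auto simp: Bad_def)
    then show False using zB by simp
  qed
  moreover have "MM *v x = - x" by (simp add: x_def MM_PP)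
  ultimately show ?thesis by blast
qed




lemma Vk_MM: "v \<in> Vk k \<Longrightarrow> MM *v v \<in> Vk k"
proof -
  assume v: "v \<in> Vk k"
  have l: "MM *v v \<in> latL" using v mat_of_int by (auto simp: Vk_def MM_def)
  have n: "bil (MM *v v) (MM *v v) = bil v v" by (rule bil_MM)
  have "\<forall>w\<in>latL. 2 * bil (MM *v v) w / bil (MM *v v) (MM *v v) \<in> \<int>"
  proof
    fix w assume w: "w \<in> latL"
    have "MM *v w \<in> latL" using w mat_of_int by (auto simp: MM_def)
    then have "2 * bil v (MM *v w) / bil v v \<in> \<int>" using v by (auto simp: Vk_def)
    then show "2 * bil (MM *v v) w / bil (MM *v v) (MM *v v) \<in> \<int>"
      by (simp add: n bil_MM_adj MM_inv)
  qed
  then show ?thesis using l n v by (auto simp: Vk_def)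
qed

definition SS where "SS = negcone - walls"

lemma SS_MM: "y \<in> SS \<Longrightarrow> MM *v y \<in> SS"
proof -
  assume y: "y \<in> SS"
  have "MM *v y \<in> negcone" using y by (simp add: SS_def negcone_def bil_MM)
  moreover have "MM *v y \<notin> walls"
  proof
    assume "MM *v y \<in> walls"
    then obtain v where v: "v \<in> Vk 2 \<union> Vk 6" and b: "bil v (MM *v y) = 0" by (auto simp: walls_def)
    have "MM *v v \<in> Vk 2 \<union> Vk 6" using v Vk_MM by blast
    moreover have "bil (MM *v v) y = 0" using b by (simp add: bil_MM_adj)
    ultimately have "y \<in> walls" by (auto simp: walls_def)
    then show False using y by (simp add: SS_def)
  qed
  ultimately show ?thesis by (simp add: SS_def)
qed

lemma SS_neg: "y \<in> SS \<Longrightarrow> - y \<in> SS"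
proof -
  assume y: "y \<in> SS"
  have "bil (-y) (-y) = bil y y" by (simp add: bil_minus_right bil_sym[of "-y"])
  then have "- y \<in> negcone" using y by (simp add: SS_def negcone_def)
  moreover have "- y \<notin> walls"
  proof
    assume "- y \<in> walls"
    then obtain v where v: "v \<in> Vk 2 \<union> Vk 6" and b: "bil v (- y) = 0" by (auto simp: walls_def)
    then have "bil v y = 0" by (simp add: bil_minus_right)
    then have "y \<in> walls" using v by (auto simp: walls_def)
    then show False using y by (simp add: SS_def)
  qed
  ultimately show ?thesis by (simp add: SS_def)
qed

lemma cc_image_sub:
  assumes "continuous_on S f" "f ` S \<subseteq> S" "x \<in> S"
  shows "f ` connected_component_set S x \<subseteq> connected_component_set S (f x)"
proof (rule connected_component_maximal)
  show "f x \<in> f ` connected_component_set S x"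
    using assms(3) connected_component_refl by fastforce
  show "connected (f ` connected_component_set S x)"
    by (rule connected_continuous_image[OF continuous_on_subset[OF assms(1) connected_component_subset]])
      simp
  show "f ` connected_component_set S x \<subseteq> S"
    using assms(2) connected_component_subset by blast
qed

lemma cc_image_inv:
  assumes "continuous_on S f" "f ` S \<subseteq> S" "x \<in> S" "\<And>y. f (f y) = y"
  shows "f ` connected_component_set S x = connected_component_set S (f x)"
proof
  show "f ` connected_component_set S x \<subseteq> connected_component_set S (f x)"
    by (rule cc_image_sub[OF assms(1-3)])
  have fx: "f x \<in> S" using assms(2,3) by blast
  have "f ` connected_component_set S (f x) \<subseteq> connected_component_set S (f (f x))"
    by (rule cc_image_sub[OF assms(1,2) fx])
  then have "f ` f ` connected_component_set S (f x) \<subseteq> f ` connected_component_set S x"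
    using assms(4) by (metis image_mono)
  moreover have "f ` f ` A = A" for A using assms(4) by (simp add: image_image)
  ultimately show "connected_component_set S (f x) \<subseteq> f ` connected_component_set S x" by simp
qed

lemma MM_neg: "MM *v (- y) = - (MM *v y)"
  using matrix_vector_mult_diff_distrib[of MM 0 y] by simp

lemma inj_MM: "inj ((*v) MM)"
  by (metis MM_inv injI)

lemma negcone_MM: "(*v) MM ` negcone = negcone"
proof
  show "(*v) MM ` negcone \<subseteq> negcone" by (auto simp: negcone_def bil_MM)
  show "negcone \<subseteq> (*v) MM ` negcone"
  proof
    fix y assume "y \<in> negcone"
    then have "MM *v y \<in> negcone" by (simp add: negcone_def bil_MM)
    then show "y \<in> (*v) MM ` negcone" by (metis MM_inv imageI)
  qed
qed

lemma negcone_neg: "uminus ` negcone = negcone"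
proof -
  have b: "bil (-y) (-y) = bil y y" for y by (simp add: bil_minus_right bil_sym[of "-y"])
  show ?thesis
  proof
    show "uminus ` negcone \<subseteq> negcone" by (auto simp: negcone_def b)
    show "negcone \<subseteq> uminus ` negcone"
    proof
      fix y assume "y \<in> negcone"
      then have "- y \<in> negcone" by (simp add: negcone_def b)
      then show "y \<in> uminus ` negcone" by (metis minus_minus imageI)
    qed
  qed
qed

lemma linear_neg21: "linear (uminus :: real^21 \<Rightarrow> real^21)"
  by (simp add: linear_iff)

theorem corollary7p7p2:
  shows "\<exists>Q M. lifted_cell Q \<and> autL M
           \<and> (\<lambda>x. M *v x) ` (Q \<union> uminus ` Q) = Q \<union> uminus ` Q
           \<and> (\<lambda>x. M *v x) ` Q = uminus ` Q
           \<and> Z3_direct M"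
proof -
  obtain x where xS: "x \<in> negcone - walls" and Mx: "MM *v x = - x" using exists_point by blast
  define C where "C = connected_component_set SS x"
  define Q where "Q = closure C \<inter> negcone"
  have lc: "lifted_cell Q" unfolding lifted_cell_def Q_def C_def SS_def using xS by blast
  have xS': "x \<in> SS" using xS by (simp add: SS_def)
  have c1: "continuous_on SS ((*v) MM)" by (rule matrix_vector_mult_linear_continuous_on)
  have c2: "continuous_on SS (uminus :: real^21 \<Rightarrow> real^21)" by (intro continuous_intros)
  have hC: "(*v) MM ` C = connected_component_set SS (- x)"
    unfolding C_def Mx[symmetric]
    by (rule cc_image_inv[OF c1]) (auto simp: SS_MM xS' MM_inv)
  have nC: "uminus ` C = connected_component_set SS (- x)"
    unfolding C_def
    by (rule cc_image_inv[OF c2]) (auto simp: SS_neg xS')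
  have MQ: "(*v) MM ` Q = uminus ` Q"
  proof -
    have "(*v) MM ` Q = (*v) MM ` closure C \<inter> (*v) MM ` negcone"
      unfolding Q_def by (rule image_Int[OF inj_MM])
    also have "(*v) MM ` closure C = closure ((*v) MM ` C)"
      by (rule closure_injective_linear_image[OF matrix_vector_mul_linear inj_MM])
    also have "uminus ` closure C = closure (uminus ` C)"
      by (rule closure_injective_linear_image[OF linear_neg21]) (simp add: inj_def)
    then have "closure ((*v) MM ` C) = uminus ` closure C" by (simp add: hC nC)
    also have "uminus ` closure C \<inter> (*v) MM ` negcone = uminus ` closure C \<inter> uminus ` negcone"
      by (simp add: negcone_MM negcone_neg)
    also have "\<dots> = uminus ` Q" unfolding Q_def by (rule image_Int[symmetric]) (simp add: inj_def)
    finally show ?thesis .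
  qed
  have MQ2: "(*v) MM ` (Q \<union> uminus ` Q) = Q \<union> uminus ` Q"
  proof -
    have "(*v) MM ` uminus ` Q = uminus ` (*v) MM ` Q"
      by (simp add: image_image MM_neg)
    also have "\<dots> = Q" by (simp add: MQ image_image)
    finally show ?thesis by (simp add: image_Un MQ Un_commute)
  qed
  show ?thesis
    apply (rule exI[of _ Q], rule exI[of _ MM])
    using lc autL_MM MQ MQ2 Z3_MM by simp
qed


end
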